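(* Let $a<b$ with $[a,b]\subset[0,\infty)$, let $f,g:[a,b]\to\mathbb{R}$ be integrable with $0\le g(t)\le1$ for all $t\in[a,b]$ and such that $\int_a^b g(t)f'(t)\,dt$ exists. Suppose $f$ is absolutely continuous on $[a,b]$ and $|f'|$ is convex on $[a,b]$. Let $\lambda:=\int_a^b g(t)\,dt$. Then $$\left|\int_a^{a+\lambda} f(t)\,dt-\int_a^b f(t)g(t)\,dt\right|\le\frac16\lambda^2|f'(a)|+\frac13\left[\lambda^2+(b-a-\lambda)^2\right]|f'(a+\lambda)|+\frac16(b-a-\lambda)^2|f'(b)|,$$ and $$\left|\int_a^b f(t)g(t)\,dt-\int_{b-\lambda}^b f(t)\,dt\right|\le\frac16\lambda^2|f'(b)|+\frac13\left[\lambda^2+(b-a-\lambda)^2\right]|f'(b-\lambda)|+\frac16(b-a-\lambda)^2|f'(a)|.$$ *)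

theory Defs
  imports "HOL-Analysis.Analysis"
begin

definition abs_continuous_on :: "real \<Rightarrow> real \<Rightarrow> (real \<Rightarrow> real) \<Rightarrow> bool" where
  "abs_continuous_on a b f \<longleftrightarrow>
     (\<forall>\<epsilon>>0. \<exists>\<delta>>0. \<forall>(n::nat) (x::nat \<Rightarrow> real) (y::nat \<Rightarrow> real).
        (\<forall>i<n. a \<le> x i \<and> x i \<le> y i \<and> y i \<le> b) \<longrightarrow>
        (\<forall>i<n. \<forall>j<n. i \<noteq> j \<longrightarrow> y i \<le> x j \<or> y j \<le> x i) \<longrightarrow>
        (\<Sum>i<n. y i - x i) < \<delta> \<longrightarrow>
        (\<Sum>i<n. \<bar>f (y i) - f (x i)\<bar>) < \<epsilon>)"

end

theory Submission
  imports Defs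
begin


lemma ac_cont:
  assumes ac: "abs_continuous_on a b f"
  shows "continuous_on {a..b} f"
  unfolding continuous_on_iff
proof (intro ballI allI impI)
  fix x e :: real assume x: "x \<in> {a..b}" and e: "0 < e"
  obtain d where d: "d > 0" and D: "\<forall>(n::nat) (X::nat \<Rightarrow> real) (Y::nat \<Rightarrow> real).
        (\<forall>i<n. a \<le> X i \<and> X i \<le> Y i \<and> Y i \<le> b) \<longrightarrow>
        (\<forall>i<n. \<forall>j<n. i \<noteq> j \<longrightarrow> Y i \<le> X j \<or> Y j \<le> X i) \<longrightarrow>
        (\<Sum>i<n. Y i - X i) < d \<longrightarrow> (\<Sum>i<n. \<bar>f (Y i) - f (X i)\<bar>) < e"
    using ac e unfolding abs_continuous_on_def by blast
  show "\<exists>d>0. \<forall>x'\<in>{a..b}. dist x' x < d \<longrightarrow> dist (f x') (f x) < e"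
  proof (intro exI[of _ d] conjI ballI impI)
    fix y assume y: "y \<in> {a..b}" "dist y x < d"
    have "(\<Sum>i<(1::nat). (\<lambda>_. max x y) i - (\<lambda>_. min x y) i) < d"
      using y by (simp add: dist_real_def min_def max_def card_lessThan abs_less_iff)
    moreover have "\<forall>i<(1::nat). a \<le> (\<lambda>_. min x y) i \<and> (\<lambda>_. min x y) i \<le> (\<lambda>_. max x y) i \<and> (\<lambda>_. max x y) i \<le> b"
      using x y by auto
    ultimately have "(\<Sum>i<(1::nat). \<bar>f ((\<lambda>_. max x y) i) - f ((\<lambda>_. min x y) i)\<bar>) < e"
      using D[rule_format, of 1 "\<lambda>_. min x y" "\<lambda>_. max x y"] by simp
    then show "dist (f y) (f x) < e"
      by (simp add: dist_real_def min_def max_def split: if_splits)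
  qed (use d in auto)
qed


lemma tdiv_iv:
  fixes s t :: real
  assumes p: "p tagged_division_of {s..t}" and xK: "(x,K) \<in> p"
  shows "K = {Inf K..Sup K} \<and> Inf K \<le> x \<and> x \<le> Sup K \<and> s \<le> Inf K \<and> Sup K \<le> t"
proof -
  obtain u v where K: "K = cbox u v" using tagged_division_ofD(4)[OF p xK] by blast
  have xin: "x \<in> K" using tagged_division_ofD(2)[OF p xK] .
  have sub: "K \<subseteq> {s..t}" using tagged_division_ofD(3)[OF p xK] .
  have uv: "u \<le> v" using xin K by auto
  have I: "Inf K = u" "Sup K = v" using K uv by auto
  have "u \<in> K" "v \<in> K" using K uv by auto
  then show ?thesis using I K xin sub uv by auto
qed

lemma tdiv_disj:
  fixes s t :: real
  assumes p: "p tagged_division_of {s..t}" and 1: "(x1,K1) \<in> p" and 2: "(x2,K2) \<in> p"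
    and ne: "(x1,K1) \<noteq> (x2,K2)" and n1: "Inf K1 < Sup K1" and n2: "Inf K2 < Sup K2"
  shows "Sup K1 \<le> Inf K2 \<or> Sup K2 \<le> Inf K1"
proof (rule ccontr)
  assume c: "\<not> ?thesis"
  have K1: "K1 = {Inf K1..Sup K1}" using tdiv_iv[OF p 1] by blast
  have K2: "K2 = {Inf K2..Sup K2}" using tdiv_iv[OF p 2] by blast
  have "interior K1 \<inter> interior K2 = {}" using tagged_division_ofD(5)[OF p 1 2 ne] .
  then have e: "{Inf K1<..<Sup K1} \<inter> {Inf K2<..<Sup K2} = {}"
    using K1 K2 by (metis interior_atLeastAtMost_real)
  define m where "m = (max (Inf K1) (Inf K2) + min (Sup K1) (Sup K2)) / 2"
  have "m \<in> {Inf K1<..<Sup K1} \<inter> {Inf K2<..<Sup K2}"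
    using c n1 n2 unfolding m_def by (auto simp: max_def min_def)
  then show False using e by blast
qed

lemma ac_bound:
  fixes f f' L P :: "real \<Rightarrow> real"
  assumes st: "a \<le> s" "s \<le> t" "t \<le> b"
    and ac: "abs_continuous_on a b f"
    and E: "negligible E"
    and der: "\<And>x. x \<in> {s..t} \<Longrightarrow> x \<notin> E \<Longrightarrow> (f has_real_derivative f' x) (at x)"
    and Lb: "\<And>x. x \<in> {s..t} \<Longrightarrow> \<bar>f' x\<bar> \<le> L x"
    and P: "\<And>x. (P has_real_derivative L x) (at x)"
  shows "\<bar>f t - f s\<bar> \<le> P t - P s"
proof (rule field_le_epsilon)
  fix e :: real assume e: "0 < e"
  define \<eta> where "\<eta> = e / (2*(t-s) + 2)"
  have eta: "\<eta> > 0" using e st by (simp add: \<eta>_def)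
  have etae: "\<eta> * (2*(t-s) + 1) \<le> e"
  proof -
    have "\<eta> * (2*(t-s) + 2) = e" using st by (simp add: \<eta>_def)
    moreover have "\<eta> * (2*(t-s) + 1) \<le> \<eta> * (2*(t-s) + 2)" using eta by (intro mult_left_mono) auto
    ultimately show ?thesis by linarith
  qed
  have Pmono: "P u \<le> P v" if "s \<le> u" "u \<le> v" "v \<le> t" for u v
  proof (rule DERIV_nonneg_imp_nondecreasing[OF \<open>u \<le> v\<close>])
    fix x assume "u \<le> x" "x \<le> v"
    then have "\<bar>f' x\<bar> \<le> L x" using Lb that by auto
    then show "\<exists>y. DERIV P x :> y \<and> 0 \<le> y" using P by (meson abs_ge_zero order_trans)
  qed
  obtain \<delta> where \<delta>: "\<delta> > 0" and D: "\<forall>(n::nat) (X::nat \<Rightarrow> real) (Y::nat \<Rightarrow> real).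
        (\<forall>i<n. a \<le> X i \<and> X i \<le> Y i \<and> Y i \<le> b) \<longrightarrow>
        (\<forall>i<n. \<forall>j<n. i \<noteq> j \<longrightarrow> Y i \<le> X j \<or> Y j \<le> X i) \<longrightarrow>
        (\<Sum>i<n. Y i - X i) < \<delta> \<longrightarrow> (\<Sum>i<n. \<bar>f (Y i) - f (X i)\<bar>) < \<eta>"
    using ac eta unfolding abs_continuous_on_def by blast
  have "(indicat_real E has_integral 0) (cbox s t)" using E unfolding negligible_def by blast
  then have "\<exists>\<gamma>. gauge \<gamma> \<and> (\<forall>\<D>. \<D> tagged_division_of (cbox s t) \<and> \<gamma> fine \<D> \<longrightarrow>
        norm ((\<Sum>(x, k)\<in>\<D>. measure lborel k *\<^sub>R indicat_real E x) - 0) < \<delta>)"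
    unfolding has_integral using \<delta> by (elim allE[of _ \<delta>]) (rule mp)
  then obtain \<gamma>0 where g0: "gauge \<gamma>0" and G0': "\<forall>\<D>. \<D> tagged_division_of (cbox s t) \<and> \<gamma>0 fine \<D> \<longrightarrow>
        norm ((\<Sum>(x, k)\<in>\<D>. measure lborel k *\<^sub>R indicat_real E x) - 0) < \<delta>"
    by (elim exE conjE)
  have G0: "norm ((\<Sum>(x,k)\<in>p. measure lborel k *\<^sub>R indicat_real E x) - 0) < \<delta>"
    if "p tagged_division_of (cbox s t)" "\<gamma>0 fine p" for p
    using G0' that by blast
  have goodd: "\<exists>d>0. \<forall>y. \<bar>y - x\<bar> < d \<longrightarrow> \<bar>f y - f x - f' x * (y - x)\<bar> \<le> \<eta> * \<bar>y - x\<bar>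
        \<and> \<bar>P y - P x - L x * (y - x)\<bar> \<le> \<eta> * \<bar>y - x\<bar>" if "x \<in> {s..t}" "x \<notin> E" for x
  proof -
    have "(f has_derivative (\<lambda>h. f' x * h)) (at x)"
      using der[OF that] by (simp add: has_field_derivative_def)
    then obtain d1 where d1: "d1 > 0" "\<forall>y. \<bar>y - x\<bar> < d1 \<longrightarrow> \<bar>f y - f x - f' x * (y - x)\<bar> \<le> \<eta> * \<bar>y - x\<bar>"
      using eta unfolding has_derivative_at_alt by (auto simp: real_norm_def)
    have "(P has_derivative (\<lambda>h. L x * h)) (at x)"
      using P[of x] by (simp add: has_field_derivative_def)
    then obtain d2 where d2: "d2 > 0" "\<forall>y. \<bar>y - x\<bar> < d2 \<longrightarrow> \<bar>P y - P x - L x * (y - x)\<bar> \<le> \<eta> * \<bar>y - x\<bar>"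
      using eta unfolding has_derivative_at_alt by (auto simp: real_norm_def)
    show ?thesis using d1 d2 by (intro exI[of _ "min d1 d2"]) auto
  qed
  define d where "d x = (SOME d. d>0 \<and> (\<forall>y. \<bar>y - x\<bar> < d \<longrightarrow> \<bar>f y - f x - f' x * (y - x)\<bar> \<le> \<eta> * \<bar>y - x\<bar>
        \<and> \<bar>P y - P x - L x * (y - x)\<bar> \<le> \<eta> * \<bar>y - x\<bar>))" for x
  have dprop: "d x > 0 \<and> (\<forall>y. \<bar>y - x\<bar> < d x \<longrightarrow> \<bar>f y - f x - f' x * (y - x)\<bar> \<le> \<eta> * \<bar>y - x\<bar>
        \<and> \<bar>P y - P x - L x * (y - x)\<bar> \<le> \<eta> * \<bar>y - x\<bar>)" if "x \<in> {s..t}" "x \<notin> E" for x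
    unfolding d_def by (rule someI_ex[OF goodd[OF that]])
  define \<gamma> where "\<gamma> x = \<gamma>0 x \<inter> (if x \<in> {s..t} \<and> x \<notin> E then ball x (d x) else UNIV)" for x
  have g: "gauge \<gamma>"
    using g0 dprop unfolding gauge_def \<gamma>_def by auto
  obtain p where p: "p tagged_division_of {s..t}" and pf: "\<gamma> fine p"
    using fine_division_exists_real[OF g] by blast
  have pf0: "\<gamma>0 fine p" using pf unfolding fine_def \<gamma>_def by auto
  have finp: "finite p" using p by blast
  define B where "B = {(x,K)\<in>p. x \<in> E \<and> Inf K < Sup K}"
  have trm: "\<bar>f (Sup K) - f (Inf K)\<bar> \<le> (P (Sup K) - P (Inf K)) + 2*\<eta>*(Sup K - Inf K)
      + (if (x,K) \<in> B then \<bar>f (Sup K) - f (Inf K)\<bar> else 0)" if xK: "(x,K) \<in> p" for x K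
  proof -
    have iv: "K = {Inf K..Sup K}" "Inf K \<le> x" "x \<le> Sup K" "s \<le> Inf K" "Sup K \<le> t"
      using tdiv_iv[OF p xK] by auto
    have Pm: "P (Inf K) \<le> P (Sup K)" using Pmono iv by auto
    show ?thesis
    proof (cases "x \<in> E")
      case True
      show ?thesis
      proof (cases "Inf K < Sup K")
        case c: True
        then show ?thesis using Pm eta iv xK True unfolding B_def by auto
      next
        case c: False
        then have "Sup K = Inf K" using iv by linarith
        then show ?thesis using Pm by simp
      qed
    next
      case False
      have xst: "x \<in> {s..t}" using iv by auto
      have "K \<subseteq> \<gamma> x" using fineD[OF pf xK] .
      then have sub: "K \<subseteq> ball x (d x)" using False xst unfolding \<gamma>_def by auto
      have "Inf K \<in> K" "Sup K \<in> K" using iv by auto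
      then have i1: "\<bar>Inf K - x\<bar> < d x" and i2: "\<bar>Sup K - x\<bar> < d x"
        using sub by (auto simp: dist_real_def abs_minus_commute)
      note dp = dprop[OF xst False]
      have D2: "\<bar>f (Sup K) - f x - f' x * (Sup K - x)\<bar> \<le> \<eta> * \<bar>Sup K - x\<bar> \<and>
          \<bar>P (Sup K) - P x - L x * (Sup K - x)\<bar> \<le> \<eta> * \<bar>Sup K - x\<bar>"
        using dp i2 by blast
      have D1: "\<bar>f (Inf K) - f x - f' x * (Inf K - x)\<bar> \<le> \<eta> * \<bar>Inf K - x\<bar> \<and>
          \<bar>P (Inf K) - P x - L x * (Inf K - x)\<bar> \<le> \<eta> * \<bar>Inf K - x\<bar>"
        using dp i1 by blast
      have ab2: "\<bar>Sup K - x\<bar> = Sup K - x" and ab1: "\<bar>Inf K - x\<bar> = x - Inf K" using iv by auto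
      have A1: "\<bar>f (Sup K) - f x - f' x * (Sup K - x)\<bar> \<le> \<eta> * (Sup K - x)"
        using D2 ab2 by simp
      have A2: "\<bar>f (Inf K) - f x - f' x * (Inf K - x)\<bar> \<le> \<eta> * (x - Inf K)"
        using D1 ab1 by simp
      have A3: "\<bar>P (Sup K) - P x - L x * (Sup K - x)\<bar> \<le> \<eta> * (Sup K - x)"
        using D2 ab2 by simp
      have A4: "\<bar>P (Inf K) - P x - L x * (Inf K - x)\<bar> \<le> \<eta> * (x - Inf K)"
        using D1 ab1 by simp
      have Lx: "\<bar>f' x\<bar> \<le> L x" using Lb xst .
      have "\<bar>f (Sup K) - f (Inf K)\<bar> \<le> \<bar>f' x\<bar> * (Sup K - Inf K) + \<eta> * (Sup K - Inf K)"
      proof -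
        have "\<bar>f' x * (Sup K - Inf K)\<bar> = \<bar>f' x\<bar> * (Sup K - Inf K)" using iv by (simp add: abs_mult)
        moreover have "f' x * (Sup K - x) - f' x * (Inf K - x) = f' x * (Sup K - Inf K)"
          by (simp add: algebra_simps)
        moreover have "\<eta> * (Sup K - x) + \<eta> * (x - Inf K) = \<eta> * (Sup K - Inf K)"
          by (simp add: algebra_simps)
        ultimately show ?thesis using A1 A2 by (smt (verit))
      qed
      also have "\<dots> \<le> L x * (Sup K - Inf K) + \<eta> * (Sup K - Inf K)"
        using Lx iv by (simp add: mult_right_mono)
      also have "\<dots> \<le> (P (Sup K) - P (Inf K)) + 2*\<eta>*(Sup K - Inf K)"
      proof -
        have "L x * (Sup K - x) - L x * (Inf K - x) = L x * (Sup K - Inf K)"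
          by (simp add: algebra_simps)
        moreover have "\<eta> * (Sup K - x) + \<eta> * (x - Inf K) = \<eta> * (Sup K - Inf K)"
          by (simp add: algebra_simps)
        moreover have "2 * \<eta> * (Sup K - Inf K) = \<eta> * (Sup K - Inf K) + \<eta> * (Sup K - Inf K)"
          by simp
        ultimately show ?thesis using A3 A4 by (smt (verit))
      qed
      finally have "\<bar>f (Sup K) - f (Inf K)\<bar> \<le> P (Sup K) - P (Inf K) + 2 * \<eta> * (Sup K - Inf K)" .
      moreover have "0 \<le> (if (x,K) \<in> B then \<bar>f (Sup K) - f (Inf K)\<bar> else 0)" by simp
      ultimately show ?thesis by linarith
    qed
  qed
  have Bp: "B \<subseteq> p" unfolding B_def by auto
  have finB: "finite B" using finite_subset[OF Bp finp] .
  have ACsum: "(\<Sum>(x,K)\<in>B. \<bar>f (Sup K) - f (Inf K)\<bar>) < \<eta>"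
  proof -
    obtain h where h: "bij_betw h {0..<card B} B" using ex_bij_betw_nat_finite[OF finB] by blast
    define n where "n = card B"
    define X where "X i = Inf (snd (h i))" for i
    define Y where "Y i = Sup (snd (h i))" for i
    have hB: "h i \<in> B" if "i < n" for i using h that unfolding n_def bij_betw_def by auto
    have hp: "(fst (h i), snd (h i)) \<in> p" if "i < n" for i using hB[OF that] Bp by auto
    have c1: "\<forall>i<n. a \<le> X i \<and> X i \<le> Y i \<and> Y i \<le> b"
    proof (intro allI impI)
      fix i assume i: "i < n"
      show "a \<le> X i \<and> X i \<le> Y i \<and> Y i \<le> b"
        using tdiv_iv[OF p hp[OF i]] st unfolding X_def Y_def by auto
    qed
    have c2: "\<forall>i<n. \<forall>j<n. i \<noteq> j \<longrightarrow> Y i \<le> X j \<or> Y j \<le> X i"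
    proof (intro allI impI)
      fix i j assume i: "i < n" and j: "j < n" and ij: "i \<noteq> j"
      have "h i \<noteq> h j" using h i j ij unfolding bij_betw_def inj_on_def n_def by auto
      then have ne: "(fst (h i), snd (h i)) \<noteq> (fst (h j), snd (h j))" by simp
      have n1: "Inf (snd (h i)) < Sup (snd (h i))" using hB[OF i] unfolding B_def by auto
      have n2: "Inf (snd (h j)) < Sup (snd (h j))" using hB[OF j] unfolding B_def by auto
      show "Y i \<le> X j \<or> Y j \<le> X i"
        using tdiv_disj[OF p hp[OF i] hp[OF j] ne n1 n2] unfolding X_def Y_def by auto
    qed
    have reidx: "(\<Sum>i<n. G (h i)) = (\<Sum>z\<in>B. G z)" for G :: "real \<times> real set \<Rightarrow> real"
      using sum.reindex_bij_betw[OF h, of G] unfolding n_def by (simp add: lessThan_atLeast0)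
    have "(\<Sum>i<n. Y i - X i) = (\<Sum>(x,K)\<in>B. Sup K - Inf K)"
      using reidx[of "\<lambda>(x,K). Sup K - Inf K"] unfolding X_def Y_def by (simp add: case_prod_beta)
    also have "\<dots> = (\<Sum>(x,K)\<in>B. measure lborel K *\<^sub>R indicat_real E x)"
    proof (rule sum.cong[OF refl])
      fix z assume z: "z \<in> B"
      obtain x K where zz: "z = (x,K)" by fastforce
      have KK: "K = {Inf K..Sup K}" "Inf K < Sup K" "x \<in> E"
        using tdiv_iv[OF p, of x K] z Bp zz unfolding B_def by auto
      have cK: "measure lborel K = Sup K - Inf K"
        using KK(1,2) by (metis content_real less_imp_le)
      show "(case z of (x,K) \<Rightarrow> Sup K - Inf K) = (case z of (x,K) \<Rightarrow> measure lborel K *\<^sub>R indicat_real E x)"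
        using zz cK KK(3) by simp
    qed
    also have "\<dots> \<le> (\<Sum>(x,K)\<in>p. measure lborel K *\<^sub>R indicat_real E x)"
      by (rule sum_mono2[OF finp Bp]) (auto simp: indicator_def)
    also have "\<dots> < \<delta>" using G0[of p] p pf0 by simp
    finally have c3: "(\<Sum>i<n. Y i - X i) < \<delta>" .
    have DD: "(\<forall>i<n. a \<le> X i \<and> X i \<le> Y i \<and> Y i \<le> b) \<longrightarrow>
        (\<forall>i<n. \<forall>j<n. i \<noteq> j \<longrightarrow> Y i \<le> X j \<or> Y j \<le> X i) \<longrightarrow>
        (\<Sum>i<n. Y i - X i) < \<delta> \<longrightarrow> (\<Sum>i<n. \<bar>f (Y i) - f (X i)\<bar>) < \<eta>"
      using D[THEN spec[where x=n], THEN spec[where x=X], THEN spec[where x=Y]] .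
    have "(\<Sum>i<n. \<bar>f (Y i) - f (X i)\<bar>) < \<eta>" using mp[OF mp[OF mp[OF DD c1] c2] c3] .
    moreover have "(\<Sum>i<n. \<bar>f (Y i) - f (X i)\<bar>) = (\<Sum>(x,K)\<in>B. \<bar>f (Sup K) - f (Inf K)\<bar>)"
      using reidx[of "\<lambda>(x,K). \<bar>f (Sup K) - f (Inf K)\<bar>"] unfolding X_def Y_def by (simp add: case_prod_beta)
    ultimately show ?thesis by simp
  qed
  have S1: "(\<Sum>(x,K)\<in>p. f (Sup K) - f (Inf K)) = f t - f s"
    using additive_tagged_division_1[OF st(2) p] .
  have S2: "(\<Sum>(x,K)\<in>p. P (Sup K) - P (Inf K)) = P t - P s"
    using additive_tagged_division_1[OF st(2) p] .
  have S3: "(\<Sum>(x,K)\<in>p. Sup K - Inf K) = t - s"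
    using additive_tagged_division_1[OF st(2) p, of "\<lambda>x. x"] by simp
  have S4: "(\<Sum>(x,K)\<in>p. (if (x,K) \<in> B then \<bar>f (Sup K) - f (Inf K)\<bar> else 0)) = (\<Sum>(x,K)\<in>B. \<bar>f (Sup K) - f (Inf K)\<bar>)"
  proof -
    have "(\<Sum>(x,K)\<in>p. (if (x,K) \<in> B then \<bar>f (Sup K) - f (Inf K)\<bar> else 0))
        = (\<Sum>z\<in>p. (if z \<in> B then (case z of (x,K) \<Rightarrow> \<bar>f (Sup K) - f (Inf K)\<bar>) else 0))"
      by (rule sum.cong) auto
    also have "\<dots> = (\<Sum>z\<in>p \<inter> B. (case z of (x,K) \<Rightarrow> \<bar>f (Sup K) - f (Inf K)\<bar>))"
      by (simp add: sum.inter_restrict[OF finp])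
    also have "p \<inter> B = B" using Bp by auto
    finally show ?thesis by simp
  qed
  have "\<bar>f t - f s\<bar> \<le> (\<Sum>(x,K)\<in>p. \<bar>f (Sup K) - f (Inf K)\<bar>)"
    unfolding S1[symmetric] by (rule order_trans[OF sum_abs]) (simp add: case_prod_beta)
  also have "\<dots> \<le> (\<Sum>(x,K)\<in>p. (P (Sup K) - P (Inf K)) + 2*\<eta>*(Sup K - Inf K)
      + (if (x,K) \<in> B then \<bar>f (Sup K) - f (Inf K)\<bar> else 0))"
    by (rule sum_mono) (use trm in auto)
  also have "\<dots> = (P t - P s) + 2*\<eta>*(t - s) + (\<Sum>(x,K)\<in>B. \<bar>f (Sup K) - f (Inf K)\<bar>)"
    using S2 S3 S4 by (simp add: sum.distrib case_prod_beta sum_distrib_left[symmetric])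
  also have "\<dots> \<le> (P t - P s) + 2*\<eta>*(t - s) + \<eta>" using ACsum by simp
  also have "\<dots> \<le> P t - P s + e" using etae by (simp add: algebra_simps)
  finally show "\<bar>f t - f s\<bar> \<le> P t - P s + e" .
qed



lemma key_bound:
  fixes f f' F1 F2 :: "real \<Rightarrow> real"
  assumes c: "a \<le> c" "c \<le> b"
    and ac: "abs_continuous_on a b f"
    and N: "negligible N"
    and der: "\<And>x. x \<in> {a..b} \<Longrightarrow> x \<notin> N \<Longrightarrow> (f has_real_derivative f' x) (at x)"
    and cvx: "convex_on {a..b} (\<lambda>t. \<bar>f' t\<bar>)"
    and F1: "F1 integrable_on {a..c}" "\<And>t. t \<in> {a..c} \<Longrightarrow> \<bar>F1 t\<bar> \<le> \<bar>f t - f c\<bar>"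
    and F2: "F2 integrable_on {c..b}" "\<And>t. t \<in> {c..b} \<Longrightarrow> \<bar>F2 t\<bar> \<le> \<bar>f t - f c\<bar>"
  shows "\<bar>integral {a..c} F1 - integral {c..b} F2\<bar> \<le>
     (c-a)^2/6 * \<bar>f' a\<bar> + (c-a)^2/3 * \<bar>f' c\<bar> + (b-c)^2/3 * \<bar>f' c\<bar> + (b-c)^2/6 * \<bar>f' b\<bar>"
proof -
  define ha where "ha = \<bar>f' a\<bar>"
  define hb where "hb = \<bar>f' b\<bar>"
  define hc where "hc = \<bar>f' c\<bar>"
  define k1 where "k1 = (hc - ha) / (c - a)"
  define k2 where "k2 = (hb - hc) / (b - c)"
  define P1 where "P1 x = k1 * (x - a)^2 / 2 + ha * x" for x
  define P2 where "P2 x = k2 * (x - c)^2 / 2 + hc * x" for x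
  have dP1: "(P1 has_real_derivative (k1 * (x - a) + ha)) (at x)" for x
    unfolding P1_def by (auto intro!: derivative_eq_intros)
  have dP2: "(P2 has_real_derivative (k2 * (x - c) + hc)) (at x)" for x
    unfolding P2_def by (auto intro!: derivative_eq_intros)
  have cv1: "convex_on {a..c} (\<lambda>t. \<bar>f' t\<bar>)"
    by (rule convex_on_subset[OF cvx]) (use c in auto)
  have cv2: "convex_on {c..b} (\<lambda>t. \<bar>f' t\<bar>)"
    by (rule convex_on_subset[OF cvx]) (use c in auto)
  have B1: "\<bar>f t - f c\<bar> \<le> P1 c - P1 t" if t: "t \<in> {a..c}" for t
  proof -
    have "\<bar>f c - f t\<bar> \<le> P1 c - P1 t"
    proof (rule ac_bound[OF _ _ _ ac N, of t c f' "\<lambda>x. k1 * (x - a) + ha"])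
      show "a \<le> t" "t \<le> c" "c \<le> b" using t c by auto
      show "(f has_real_derivative f' x) (at x)" if "x \<in> {t..c}" "x \<notin> N" for x
        using der that t c by auto
      show "\<bar>f' x\<bar> \<le> k1 * (x - a) + ha" if "x \<in> {t..c}" for x
        using convex_onD_Icc'[OF cv1, of x] that t unfolding k1_def ha_def hc_def by auto
      show "(P1 has_real_derivative k1 * (x - a) + ha) (at x)" for x by (rule dP1)
    qed
    then show ?thesis by (simp add: abs_minus_commute)
  qed
  have B2: "\<bar>f t - f c\<bar> \<le> P2 t - P2 c" if t: "t \<in> {c..b}" for t
  proof (rule ac_bound[OF _ _ _ ac N, of c t f' "\<lambda>x. k2 * (x - c) + hc"])
    show "a \<le> c" "c \<le> t" "t \<le> b" using t c by auto
    show "(f has_real_derivative f' x) (at x)" if "x \<in> {c..t}" "x \<notin> N" for x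
      using der that t c by auto
    show "\<bar>f' x\<bar> \<le> k2 * (x - c) + hc" if "x \<in> {c..t}" for x
      using convex_onD_Icc'[OF cv2, of x] that t unfolding k2_def hb_def hc_def by auto
    show "(P2 has_real_derivative k2 * (x - c) + hc) (at x)" for x by (rule dP2)
  qed
  define Q1 where "Q1 t = P1 c * t - (k1 * (t - a)^3 / 6 + ha * t^2 / 2)" for t
  define Q2 where "Q2 t = k2 * (t - c)^3 / 6 + hc * t^2 / 2 - P2 c * t" for t
  have I1: "((\<lambda>t. P1 c - P1 t) has_integral (Q1 c - Q1 a)) {a..c}"
  proof (rule fundamental_theorem_of_calculus[OF c(1)])
    fix x assume "x \<in> {a..c}"
    have "(Q1 has_real_derivative (P1 c - P1 x)) (at x)"
      unfolding Q1_def P1_def[of x] by (auto intro!: derivative_eq_intros simp: power2_eq_square)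
    then show "(Q1 has_vector_derivative (P1 c - P1 x)) (at x within {a..c})"
      by (simp add: has_real_derivative_iff_has_vector_derivative has_vector_derivative_at_within)
  qed
  have I2: "((\<lambda>t. P2 t - P2 c) has_integral (Q2 b - Q2 c)) {c..b}"
  proof (rule fundamental_theorem_of_calculus[OF c(2)])
    fix x assume "x \<in> {c..b}"
    have "(Q2 has_real_derivative (P2 x - P2 c)) (at x)"
      unfolding Q2_def P2_def[of x] by (auto intro!: derivative_eq_intros simp: power2_eq_square)
    then show "(Q2 has_vector_derivative (P2 x - P2 c)) (at x within {c..b})"
      by (simp add: has_real_derivative_iff_has_vector_derivative has_vector_derivative_at_within)
  qed
  have V1: "Q1 c - Q1 a = (c-a)^2/6 * ha + (c-a)^2/3 * hc"
  proof (cases "c = a")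
    case True then show ?thesis unfolding Q1_def by simp
  next
    case False
    then have e: "hc = ha + k1 * (c - a)" unfolding k1_def by simp
    show ?thesis unfolding Q1_def P1_def e by (simp add: field_simps power2_eq_square power3_eq_cube)
  qed
  have V2: "Q2 b - Q2 c = (b-c)^2/3 * hc + (b-c)^2/6 * hb"
  proof (cases "c = b")
    case True then show ?thesis unfolding Q2_def by simp
  next
    case False
    then have e: "hb = hc + k2 * (b - c)" unfolding k2_def by simp
    show ?thesis unfolding Q2_def P2_def e by (simp add: field_simps power2_eq_square power3_eq_cube)
  qed
  have N1: "\<bar>integral {a..c} F1\<bar> \<le> (c-a)^2/6 * ha + (c-a)^2/3 * hc"
  proof -
    have "norm (integral {a..c} F1) \<le> integral {a..c} (\<lambda>t. P1 c - P1 t)"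
      by (rule integral_norm_bound_integral[OF F1(1) has_integral_integrable[OF I1]])
         (use F1(2) B1 in \<open>force simp: real_norm_def\<close>)
    then show ?thesis using integral_unique[OF I1] V1 by simp
  qed
  have N2: "\<bar>integral {c..b} F2\<bar> \<le> (b-c)^2/3 * hc + (b-c)^2/6 * hb"
  proof -
    have "norm (integral {c..b} F2) \<le> integral {c..b} (\<lambda>t. P2 t - P2 c)"
      by (rule integral_norm_bound_integral[OF F2(1) has_integral_integrable[OF I2]])
         (use F2(2) B2 in \<open>force simp: real_norm_def\<close>)
    then show ?thesis using integral_unique[OF I2] V2 by simp
  qed
  show ?thesis using N1 N2 unfolding ha_def hb_def hc_def by linarith
qed



theorem corollary2p3:
  fixes a b lam :: real and f g f' :: "real \<Rightarrow> real"
  assumes ab: "a < b" and a0: "0 \<le> a"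
    and f_int: "f integrable_on {a..b}" and g_int: "g integrable_on {a..b}"
    and g_bounds: "\<forall>t\<in>{a..b}. 0 \<le> g t \<and> g t \<le> 1"
    and gf'_int: "(\<lambda>t. g t * f' t) integrable_on {a..b}"
    and f_ac: "abs_continuous_on a b f"
    and f'_deriv: "AE t in lborel. t \<in> {a..b} \<longrightarrow> (f has_real_derivative f' t) (at t)"
    and f'_convex: "convex_on {a..b} (\<lambda>t. \<bar>f' t\<bar>)"
    defines lam_def: "lam \<equiv> integral {a..b} g"
  shows "     \<bar>integral {a..a+lam} f - integral {a..b} (\<lambda>t. f t * g t)\<bar>
       \<le> 1/6 * lam^2 * \<bar>f' a\<bar> + 1/3 * (lam^2 + (b - a - lam)^2) * \<bar>f' (a + lam)\<bar>
         + 1/6 * (b - a - lam)^2 * \<bar>f' b\<bar>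
   \<and> \<bar>integral {a..b} (\<lambda>t. f t * g t) - integral {b-lam..b} f\<bar>
       \<le> 1/6 * lam^2 * \<bar>f' b\<bar> + 1/3 * (lam^2 + (b - a - lam)^2) * \<bar>f' (b - lam)\<bar>
         + 1/6 * (b - a - lam)^2 * \<bar>f' a\<bar>"
proof -
  have fc: "continuous_on {a..b} f" using ac_cont[OF f_ac] .
  have lam0: "0 \<le> lam" unfolding lam_def using integral_nonneg[OF g_int] g_bounds by auto
  have "integral {a..b} g \<le> integral {a..b} (\<lambda>_. 1::real)"
    by (rule integral_le[OF g_int]) (use g_bounds in auto)
  then have lamb: "lam \<le> b - a" unfolding lam_def using ab by simp
  obtain N where N1: "{x \<in> space lborel. \<not> (x \<in> {a..b} \<longrightarrow> (f has_real_derivative f' x) (at x))} \<subseteq> N"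
    and N2: "emeasure lborel N = 0" and N3: "N \<in> sets lborel"
    using f'_deriv by (rule AE_E)
  have "N \<in> null_sets lborel" using N2 N3 by (simp add: null_sets_def)
  then have "N \<in> null_sets lebesgue" by (rule null_sets_completionI)
  then have negN: "negligible N" by (simp add: negligible_iff_null_sets)
  have der: "(f has_real_derivative f' x) (at x)" if "x \<in> {a..b}" "x \<notin> N" for x
    using N1 that by auto
  have gabs: "g absolutely_integrable_on {a..b}"
    by (rule nonnegative_absolutely_integrable_1[OF g_int]) (use g_bounds in auto)
  have fgabs: "(\<lambda>t. f t * g t) absolutely_integrable_on {a..b}"
  proof (rule absolutely_integrable_bounded_measurable_product_real[OF _ _ _ gabs])
    show "f \<in> borel_measurable (lebesgue_on {a..b})"
      by (rule continuous_imp_measurable_on_sets_lebesgue[OF fc]) simp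
    show "{a..b} \<in> sets lebesgue" by simp
    show "bounded (f ` {a..b})"
      by (rule compact_imp_bounded[OF compact_continuous_image[OF fc]]) simp
  qed
  have fgI: "(\<lambda>t. f t * g t) integrable_on {a..b}"
    using fgabs set_lebesgue_integral_eq_integral(1) by blast
  have subI: "f integrable_on {u..v} \<and> g integrable_on {u..v} \<and> (\<lambda>t. f t * g t) integrable_on {u..v}"
    if "a \<le> u" "v \<le> b" for u v
    using integrable_on_subinterval[OF f_int, of u v] integrable_on_subinterval[OF g_int, of u v]
      integrable_on_subinterval[OF fgI, of u v] that by auto
  have comb: "integral {u..c} F + integral {c..v} F = integral {u..v} F"
    if "a \<le> u" "u \<le> c" "c \<le> v" "v \<le> b" and "F integrable_on {a..b}" for u c v and F :: "real \<Rightarrow> real"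
    using Henstock_Kurzweil_Integration.integral_combine[of u c v F] integrable_on_subinterval[of F "{a..b}" u v] that by auto
  have HI1: "((\<lambda>t. (1 - g t) * (f t - f c)) has_integral
      (integral {u..v} f - integral {u..v} (\<lambda>t. f t * g t) - (v - u) * f c + f c * integral {u..v} g)) {u..v}"
    if "a \<le> u" "u \<le> v" "v \<le> b" for u v c
  proof -
    have I: "f integrable_on {u..v}" "g integrable_on {u..v}" "(\<lambda>t. f t * g t) integrable_on {u..v}"
      using subI[of u v] that by auto
    have "((\<lambda>t. f t - f t * g t - f c + f c * g t) has_integral
      (integral {u..v} f - integral {u..v} (\<lambda>t. f t * g t) - measure lborel {u..v} *\<^sub>R f c + f c * integral {u..v} g)) {u..v}"
      by (intro has_integral_add has_integral_diff has_integral_mult_right integrable_integral I has_integral_const_real)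
    moreover have "(\<lambda>t. f t - f t * g t - f c + f c * g t) = (\<lambda>t. (1 - g t) * (f t - f c))"
      by (auto simp: algebra_simps)
    ultimately show ?thesis using that by (simp add: content_real)
  qed
  have HI2: "((\<lambda>t. g t * (f t - f c)) has_integral
      (integral {u..v} (\<lambda>t. f t * g t) - f c * integral {u..v} g)) {u..v}"
    if "a \<le> u" "u \<le> v" "v \<le> b" for u v c
  proof -
    have I: "f integrable_on {u..v}" "g integrable_on {u..v}" "(\<lambda>t. f t * g t) integrable_on {u..v}"
      using subI[of u v] that by auto
    have "((\<lambda>t. f t * g t - f c * g t) has_integral
      (integral {u..v} (\<lambda>t. f t * g t) - f c * integral {u..v} g)) {u..v}"
      by (intro has_integral_diff has_integral_mult_right integrable_integral I)
    moreover have "(\<lambda>t. f t * g t - f c * g t) = (\<lambda>t. g t * (f t - f c))"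
      by (auto simp: algebra_simps)
    ultimately show ?thesis by simp
  qed
  have bnd1: "\<bar>(1 - g t) * (f t - f c)\<bar> \<le> \<bar>f t - f c\<bar>" if "t \<in> {a..b}" for t c
  proof -
    have "0 \<le> 1 - g t" "1 - g t \<le> 1" using g_bounds that by auto
    then show ?thesis by (simp add: abs_mult mult_left_le_one_le)
  qed
  have bnd2: "\<bar>g t * (f t - f c)\<bar> \<le> \<bar>f t - f c\<bar>" if "t \<in> {a..b}" for t c
  proof -
    have "0 \<le> g t" "g t \<le> 1" using g_bounds that by auto
    then show ?thesis by (simp add: abs_mult mult_left_le_one_le)
  qed
  have gsplit: "integral {a..c} g + integral {c..b} g = lam" if "a \<le> c" "c \<le> b" for c
    unfolding lam_def by (rule comb) (use that ab g_int in auto)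
  have fgsplit: "integral {a..c} (\<lambda>t. f t * g t) + integral {c..b} (\<lambda>t. f t * g t) = integral {a..b} (\<lambda>t. f t * g t)"
    if "a \<le> c" "c \<le> b" for c
    by (rule comb) (use that ab fgI in auto)
  define c1 where "c1 = a + lam"
  have c1: "a \<le> c1" "c1 \<le> b" using lam0 lamb unfolding c1_def by auto
  have P1: "\<bar>integral {a..c1} f - integral {a..b} (\<lambda>t. f t * g t)\<bar> \<le>
     (c1-a)^2/6 * \<bar>f' a\<bar> + (c1-a)^2/3 * \<bar>f' c1\<bar> + (b-c1)^2/3 * \<bar>f' c1\<bar> + (b-c1)^2/6 * \<bar>f' b\<bar>"
  proof -
    note A = HI1[of a c1 c1] HI2[of c1 b c1]
    have eq: "integral {a..c1} f - integral {a..b} (\<lambda>t. f t * g t)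
       = integral {a..c1} (\<lambda>t. (1 - g t) * (f t - f c1)) - integral {c1..b} (\<lambda>t. g t * (f t - f c1))"
    proof -
      have i1: "integral {a..c1} (\<lambda>t. (1 - g t) * (f t - f c1)) = integral {a..c1} f - integral {a..c1} (\<lambda>t. f t * g t) - (c1 - a) * f c1 + f c1 * integral {a..c1} g"
        using integral_unique[OF A(1)] c1 ab by simp
      have i2: "integral {c1..b} (\<lambda>t. g t * (f t - f c1)) = integral {c1..b} (\<lambda>t. f t * g t) - f c1 * integral {c1..b} g"
        using integral_unique[OF A(2)] c1 ab by simp
      have m1: "(c1 - a) * f c1 = lam * f c1" unfolding c1_def by simp
      have m2: "f c1 * integral {a..c1} g + f c1 * integral {c1..b} g = lam * f c1"
        using gsplit[OF c1] by (metis distrib_left mult.commute)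
      show ?thesis using i1 i2 m1 m2 fgsplit[OF c1] by linarith
    qed
    show ?thesis unfolding eq
      by (rule key_bound[OF c1 f_ac negN der f'_convex])
         (use A c1 bnd1 bnd2 in \<open>auto intro: has_integral_integrable\<close>)
  qed
  define c2 where "c2 = b - lam"
  have c2: "a \<le> c2" "c2 \<le> b" using lam0 lamb unfolding c2_def by auto
  have P2: "\<bar>integral {a..b} (\<lambda>t. f t * g t) - integral {c2..b} f\<bar> \<le>
     (c2-a)^2/6 * \<bar>f' a\<bar> + (c2-a)^2/3 * \<bar>f' c2\<bar> + (b-c2)^2/3 * \<bar>f' c2\<bar> + (b-c2)^2/6 * \<bar>f' b\<bar>"
  proof -
    note A = HI2[of a c2 c2] HI1[of c2 b c2]
    have eq: "integral {a..b} (\<lambda>t. f t * g t) - integral {c2..b} f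
       = integral {a..c2} (\<lambda>t. g t * (f t - f c2)) - integral {c2..b} (\<lambda>t. (1 - g t) * (f t - f c2))"
    proof -
      have i1: "integral {c2..b} (\<lambda>t. (1 - g t) * (f t - f c2)) = integral {c2..b} f - integral {c2..b} (\<lambda>t. f t * g t) - (b - c2) * f c2 + f c2 * integral {c2..b} g"
        using integral_unique[OF A(2)] c2 ab by simp
      have i2: "integral {a..c2} (\<lambda>t. g t * (f t - f c2)) = integral {a..c2} (\<lambda>t. f t * g t) - f c2 * integral {a..c2} g"
        using integral_unique[OF A(1)] c2 ab by simp
      have m1: "(b - c2) * f c2 = lam * f c2" unfolding c2_def by simp
      have m2: "f c2 * integral {a..c2} g + f c2 * integral {c2..b} g = lam * f c2"
        using gsplit[OF c2] by (metis distrib_left mult.commute)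
      show ?thesis using i1 i2 m1 m2 fgsplit[OF c2] by linarith
    qed
    show ?thesis unfolding eq
      by (rule key_bound[OF c2 f_ac negN der f'_convex])
         (use A c2 bnd1 bnd2 in \<open>auto intro: has_integral_integrable\<close>)
  qed
  have e1: "c1 - a = lam" "b - c1 = b - a - lam" unfolding c1_def by auto
  have e2: "c2 - a = b - a - lam" "b - c2 = lam" unfolding c2_def by auto
  show ?thesis
  proof
    show "\<bar>integral {a..a+lam} f - integral {a..b} (\<lambda>t. f t * g t)\<bar>
       \<le> 1/6 * lam^2 * \<bar>f' a\<bar> + 1/3 * (lam^2 + (b - a - lam)^2) * \<bar>f' (a + lam)\<bar>
         + 1/6 * (b - a - lam)^2 * \<bar>f' b\<bar>"
      using P1 unfolding e1 unfolding c1_def by (simp add: algebra_simps)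
    show "\<bar>integral {a..b} (\<lambda>t. f t * g t) - integral {b-lam..b} f\<bar>
       \<le> 1/6 * lam^2 * \<bar>f' b\<bar> + 1/3 * (lam^2 + (b - a - lam)^2) * \<bar>f' (b - lam)\<bar>
         + 1/6 * (b - a - lam)^2 * \<bar>f' a\<bar>"
      using P2 unfolding e2 unfolding c2_def by (simp add: algebra_simps)
  qed
qed

end
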